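(* Let $X$ and $Y$ be $\emptyset$-hyperdefinable sets with $X\perp_\emptyset Y$. If an $\emptyset$-hyperdefinable set $Z$ is both almost $X$-internal within $X\cup Y$ and almost $Y$-internal within $X\cup Y$, then $Z$ is bounded (has cardinality $<\kappa$).
   Context: Work in a $\kappa$-saturated, strongly $\kappa$-homogeneous monster model $\mathfrak M$ for a very large $\kappa$; "bounded" means of cardinality $<\kappa$. A countable equivalence relation over $A$ is an equivalence relation given by a conjunction of countably many formulas over $A$ (in countably many variables). A hyperimaginary of type $E$ is the class $a_E$ of a tuple $a$ modulo a countable equivalence relation $E$ over $\emptyset$; tuples (possibly infinite) of hyperimaginaries are allowed, and all tuples and parameter sets are hyperimaginary unless otherwise stated. A hyperimaginary $e$ is definable (resp. bounded) over a set $B$ of hyperimaginaries if every automorphism of $\mathfrak M$ fixing $B$ pointwise fixes $e$ (resp. the orbit of $e$ under such automorphisms is bounded); $\mathrm{dcl}^{heq}(B)$ and $\mathrm{bdd}(B)$ denote the sets of hyperimaginaries definable, resp. bounded, over $B$. A set $X$ is hyperdefinable over $A$ if $X=Z/E$ where $Z$ is type-definable over $A$ in countably many variables and $E$ is a countable equivalence relation on $Z$ over $A$. $X\perp_A Y$ (orthogonality over $A$) means: for all tuples $a$ from $X$ and $b$ from $Y$, $\mathrm{tp}(a/A)\cup\mathrm{tp}(b/A)\vdash\mathrm{tp}(ab/A)$. Internality: for hyperdefinable sets $X',X$, $X'$ is almost $X$-internal within a set $Z$ if there is a parameter set $B\subseteq Z^{heq}$ such that for every $a\in X'$ there is a tuple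 $b$ from $X$ with $a\in\mathrm{bdd}(Bb)$. "Within $X\cup Y$" means parameters from $(X\cup Y)^{heq}$, the set of hyperimaginaries definable over tuples from $X\cup Y$. *)

theory Defs
  imports Main "HOL-Library.Countable_Set"
begin

datatype 'f trm = Var nat | Fn 'f "'f trm list"

datatype ('f, 'r) fm =
    Bot
  | Eqf "'f trm" "'f trm"
  | Rel 'r "'f trm list"
  | Neg "('f, 'r) fm"
  | Conj "('f, 'r) fm" "('f, 'r) fm"
  | Exi nat "('f, 'r) fm"

text \<open>A structure with universe UNIV of type 'a: interpretations of the
  function symbols and the relation symbols.\<close>
type_synonym ('f, 'r, 'a) struc = "('f \<Rightarrow> 'a list \<Rightarrow> 'a) \<times> ('r \<Rightarrow> 'a list \<Rightarrow> bool)"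

fun evalt :: "('f, 'r, 'a) struc \<Rightarrow> (nat \<Rightarrow> 'a) \<Rightarrow> 'f trm \<Rightarrow> 'a" where
  "evalt S v (Var n) = v n"
| "evalt S v (Fn f ts) = fst S f (map (evalt S v) ts)"

primrec sat :: "('f, 'r, 'a) struc \<Rightarrow> (nat \<Rightarrow> 'a) \<Rightarrow> ('f, 'r) fm \<Rightarrow> bool" where
  "sat S v Bot = False"
| "sat S v (Eqf s t) = (evalt S v s = evalt S v t)"
| "sat S v (Rel r ts) = snd S r (map (evalt S v) ts)"
| "sat S v (Neg \<phi>) = (\<not> sat S v \<phi>)"
| "sat S v (Conj \<phi> \<psi>) = (sat S v \<phi> \<and> sat S v \<psi>)"
| "sat S v (Exi n \<phi>) = (\<exists>x. sat S (v(n := x)) \<phi>)"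

fun fvt :: "'f trm \<Rightarrow> nat set" where
  "fvt (Var n) = {n}"
| "fvt (Fn f ts) = (\<Union>t\<in>set ts. fvt t)"

primrec fv :: "('f, 'r) fm \<Rightarrow> nat set" where
  "fv Bot = {}"
| "fv (Eqf s t) = fvt s \<union> fvt t"
| "fv (Rel r ts) = (\<Union>t\<in>set ts. fvt t)"
| "fv (Neg \<phi>) = fv \<phi>"
| "fv (Conj \<phi> \<psi>) = fv \<phi> \<union> fv \<psi>"
| "fv (Exi n \<phi>) = fv \<phi> - {n}"

definition lt_card :: "'b set \<Rightarrow> 'k rel \<Rightarrow> bool" where
  "lt_card A \<kappa> \<longleftrightarrow> ordLess2 (card_of A) \<kappa>"

text \<open>Reading of "a very large kappa": an uncountable regular strong-limit
  cardinal (i.e. strongly inaccessible).\<close>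
definition very_large_card :: "'k rel \<Rightarrow> bool" where
  "very_large_card \<kappa> \<longleftrightarrow> Card_order \<kappa> \<and> ordLess2 natLeq \<kappa> \<and> regularCard \<kappa> \<and>
     (\<forall>A. A \<subseteq> Field \<kappa> \<longrightarrow> lt_card A \<kappa> \<longrightarrow> lt_card (Pow A) \<kappa>)"

definition is_aut :: "('f, 'r, 'a) struc \<Rightarrow> ('a \<Rightarrow> 'a) \<Rightarrow> bool" where
  "is_aut S \<sigma> \<longleftrightarrow> bij \<sigma> \<and>
     (\<forall>f xs. \<sigma> (fst S f xs) = fst S f (map \<sigma> xs)) \<and>
     (\<forall>r xs. snd S r (map \<sigma> xs) = snd S r xs)"

definition elem_map :: "('f, 'r, 'a) struc \<Rightarrow> 'a set \<Rightarrow> ('a \<Rightarrow> 'a) \<Rightarrow> bool" where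
  "elem_map S D g \<longleftrightarrow>
     (\<forall>(\<phi> :: ('f, 'r) fm) v. range v \<subseteq> D \<longrightarrow> (sat S v \<phi> \<longleftrightarrow> sat S (g \<circ> v) \<phi>))"

definition strongly_homogeneous :: "('f, 'r, 'a) struc \<Rightarrow> 'k rel \<Rightarrow> bool" where
  "strongly_homogeneous S \<kappa> \<longleftrightarrow>
     (\<forall>D g. lt_card D \<kappa> \<longrightarrow> elem_map S D g \<longrightarrow>
        (\<exists>\<sigma>. is_aut S \<sigma> \<and> (\<forall>x\<in>D. \<sigma> x = g x)))"

text \<open>A formula with parameters in the single free variable 0 is a pair
  (phi, p): the variables of phi other than 0 are interpreted by p.
  Element a realizes it iff sat S (p(0 := a)) phi.\<close>
definition saturated :: "('f, 'r, 'a) struc \<Rightarrow> 'k rel \<Rightarrow> bool" where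
  "saturated S \<kappa> \<longleftrightarrow>
     (\<forall>(A :: 'a set) (P :: (('f, 'r) fm \<times> (nat \<Rightarrow> 'a)) set).
        lt_card A \<kappa> \<longrightarrow>
        (\<forall>(\<phi>, p)\<in>P. \<forall>n\<in>fv \<phi> - {0}. p n \<in> A) \<longrightarrow>
        (\<forall>F. F \<subseteq> P \<longrightarrow> finite F \<longrightarrow> (\<exists>a. \<forall>(\<phi>, p)\<in>F. sat S (p(0 := a)) \<phi>)) \<longrightarrow>
        (\<exists>a. \<forall>(\<phi>, p)\<in>P. sat S (p(0 := a)) \<phi>))"

text \<open>Interleaving of two countable tuples, used as the variable assignment for
  formulas in the pair of variable tuples (x, y).\<close>
definition pairv :: "(nat \<Rightarrow> 'a) \<Rightarrow> (nat \<Rightarrow> 'a) \<Rightarrow> nat \<Rightarrow> 'a" where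
  "pairv a b n = (if even n then a (n div 2) else b (n div 2))"

definition tdef :: "('f, 'r, 'a) struc \<Rightarrow> ('f, 'r) fm set \<Rightarrow> (nat \<Rightarrow> 'a) set" where
  "tdef S \<Sigma> = {a. \<forall>\<phi>\<in>\<Sigma>. sat S a \<phi>}"

definition Erel :: "('f, 'r, 'a) struc \<Rightarrow> ('f, 'r) fm set \<Rightarrow> (nat \<Rightarrow> 'a) \<Rightarrow> (nat \<Rightarrow> 'a) \<Rightarrow> bool" where
  "Erel S \<Phi> a b \<longleftrightarrow> (\<forall>\<phi>\<in>\<Phi>. sat S (pairv a b) \<phi>)"

definition ceq_on :: "('f, 'r, 'a) struc \<Rightarrow> (nat \<Rightarrow> 'a) set \<Rightarrow> ('f, 'r) fm set \<Rightarrow> bool" where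
  "ceq_on S W \<Phi> \<longleftrightarrow> countable \<Phi> \<and>
     (\<forall>a\<in>W. Erel S \<Phi> a a) \<and>
     (\<forall>a\<in>W. \<forall>b\<in>W. Erel S \<Phi> a b \<longrightarrow> Erel S \<Phi> b a) \<and>
     (\<forall>a\<in>W. \<forall>b\<in>W. \<forall>c\<in>W. Erel S \<Phi> a b \<longrightarrow> Erel S \<Phi> b c \<longrightarrow> Erel S \<Phi> a c)"

text \<open>Hyperimaginaries are represented by their classes (sets of countable tuples).\<close>
definition hyperimaginary :: "('f, 'r, 'a) struc \<Rightarrow> (nat \<Rightarrow> 'a) set \<Rightarrow> bool" where
  "hyperimaginary S e \<longleftrightarrow>
     (\<exists>(\<Phi> :: ('f, 'r) fm set) a. ceq_on S UNIV \<Phi> \<and> e = {b. Erel S \<Phi> a b})"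

definition hyperdef :: "('f, 'r, 'a) struc \<Rightarrow> (nat \<Rightarrow> 'a) set set \<Rightarrow> bool" where
  "hyperdef S X \<longleftrightarrow>
     (\<exists>(\<Sigma> :: ('f, 'r) fm set) (\<Phi> :: ('f, 'r) fm set).
        ceq_on S (tdef S \<Sigma>) \<Phi> \<and>
        X = {{b \<in> tdef S \<Sigma>. Erel S \<Phi> a b} | a. a \<in> tdef S \<Sigma>})"

definition act :: "('a \<Rightarrow> 'a) \<Rightarrow> (nat \<Rightarrow> 'a) set \<Rightarrow> (nat \<Rightarrow> 'a) set" where
  "act \<sigma> e = (\<lambda>t. \<sigma> \<circ> t) ` e"

definition fixes_all :: "('a \<Rightarrow> 'a) \<Rightarrow> (nat \<Rightarrow> 'a) set set \<Rightarrow> bool" where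
  "fixes_all \<sigma> D \<longleftrightarrow> (\<forall>d\<in>D. act \<sigma> d = d)"

definition dclheq :: "('f, 'r, 'a) struc \<Rightarrow> (nat \<Rightarrow> 'a) set set \<Rightarrow> (nat \<Rightarrow> 'a) set \<Rightarrow> bool" where
  "dclheq S D e \<longleftrightarrow> (\<forall>\<sigma>. is_aut S \<sigma> \<and> fixes_all \<sigma> D \<longrightarrow> act \<sigma> e = e)"

definition bdd :: "('f, 'r, 'a) struc \<Rightarrow> 'k rel \<Rightarrow> (nat \<Rightarrow> 'a) set set \<Rightarrow> (nat \<Rightarrow> 'a) set \<Rightarrow> bool" where
  "bdd S \<kappa> D e \<longleftrightarrow> lt_card {act \<sigma> e | \<sigma>. is_aut S \<sigma> \<and> fixes_all \<sigma> D} \<kappa>"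

definition heq :: "('f, 'r, 'a) struc \<Rightarrow> 'k rel \<Rightarrow> (nat \<Rightarrow> 'a) set set \<Rightarrow> (nat \<Rightarrow> 'a) set set" where
  "heq S \<kappa> P = {e. hyperimaginary S e \<and> (\<exists>C\<subseteq>P. lt_card C \<kappa> \<and> dclheq S C e)}"

text \<open>For hyperimaginary tuples, equality of
  types (over the empty set) in the monster model is being in the same
  automorphism orbit; tp(a) \<union> tp(b) \<turnstile> tp(ab) says that any realizations
  sigma(a) of tp(a) and tau(b) of tp(b) together realize tp(ab).\<close>
definition orth :: "('f, 'r, 'a) struc \<Rightarrow> 'k rel \<Rightarrow> (nat \<Rightarrow> 'a) set set \<Rightarrow> (nat \<Rightarrow> 'a) set set \<Rightarrow> bool" where
  "orth S \<kappa> X Y \<longleftrightarrow>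
     (\<forall>a b \<sigma> \<tau>. a \<subseteq> X \<longrightarrow> b \<subseteq> Y \<longrightarrow> lt_card a \<kappa> \<longrightarrow> lt_card b \<kappa> \<longrightarrow>
        is_aut S \<sigma> \<longrightarrow> is_aut S \<tau> \<longrightarrow>
        (\<exists>\<rho>. is_aut S \<rho> \<and> (\<forall>x\<in>a. act \<rho> x = act \<sigma> x) \<and> (\<forall>y\<in>b. act \<rho> y = act \<tau> y)))"

definition alm_internal ::
  "('f, 'r, 'a) struc \<Rightarrow> 'k rel \<Rightarrow> (nat \<Rightarrow> 'a) set set \<Rightarrow> (nat \<Rightarrow> 'a) set set \<Rightarrow> (nat \<Rightarrow> 'a) set set \<Rightarrow> bool" where
  "alm_internal S \<kappa> X' X P \<longleftrightarrow>
     (\<exists>B. B \<subseteq> heq S \<kappa> P \<and> lt_card B \<kappa> \<and>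
        (\<forall>a\<in>X'. \<exists>b. b \<subseteq> X \<and> lt_card b \<kappa> \<and> bdd S \<kappa> (B \<union> b) a))"

end

theory Submission
  imports Defs
begin

unbundle cardinal_syntax



lemma vl_props:
  assumes "very_large_card \<kappa>"
  shows "Card_order \<kappa>" "infinite (Field \<kappa>)" "regularCard \<kappa>" "natLeq <o \<kappa>" "Cinfinite \<kappa>"
proof -
  show co: "Card_order \<kappa>" using assms unfolding very_large_card_def by auto
  show nl: "natLeq <o \<kappa>" using assms unfolding very_large_card_def by auto
  show "regularCard \<kappa>" using assms unfolding very_large_card_def by auto
  have "natLeq \<le>o |Field \<kappa>|"
    using nl co card_of_Field_ordIso ordLess_imp_ordLeq ordLeq_ordIso_trans ordIso_symmetric by blast
  then show inf: "infinite (Field \<kappa>)" using infinite_iff_natLeq_ordLeq by blast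
  show "Cinfinite \<kappa>" using co inf by (simp add: cinfinite_def)
qed

lemma lt_sub: "lt_card A \<kappa> \<Longrightarrow> B \<subseteq> A \<Longrightarrow> lt_card B \<kappa>"
  unfolding lt_card_def by (rule ordLeq_ordLess_trans[OF card_of_mono1])

lemma lt_image: "lt_card A \<kappa> \<Longrightarrow> lt_card (f ` A) \<kappa>"
  unfolding lt_card_def by (rule ordLeq_ordLess_trans[OF card_of_image])

lemma lt_inj: "lt_card B \<kappa> \<Longrightarrow> inj_on f A \<Longrightarrow> f ` A \<subseteq> B \<Longrightarrow> lt_card A \<kappa>"
  unfolding lt_card_def
  by (rule ordLeq_ordLess_trans[OF card_of_ordLeq[THEN iffD1, OF exI[of _ f]]]) auto

lemma lt_countable: "very_large_card \<kappa> \<Longrightarrow> countable A \<Longrightarrow> lt_card A \<kappa>"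
proof -
  assume K: "very_large_card \<kappa>" and c: "countable A"
  then obtain f :: "_ \<Rightarrow> nat" where "inj_on f A" by (auto simp: countable_def)
  then have "|A| \<le>o |UNIV :: nat set|" by (intro card_of_ordLeq[THEN iffD1, OF exI[of _ f]]) auto
  then have "|A| \<le>o natLeq" by (rule ordLeq_ordIso_trans[OF _ card_of_nat])
  then show ?thesis unfolding lt_card_def by (rule ordLeq_ordLess_trans[OF _ vl_props(4)[OF K]])
qed

lemma lt_UN: "very_large_card \<kappa> \<Longrightarrow> lt_card I \<kappa> \<Longrightarrow> (\<And>i. i \<in> I \<Longrightarrow> lt_card (F i) \<kappa>) \<Longrightarrow> lt_card (\<Union>i\<in>I. F i) \<kappa>"
  unfolding lt_card_def by (rule regularCard_UNION_bound[OF vl_props(5) vl_props(3)])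

lemma lt_Un: "very_large_card \<kappa> \<Longrightarrow> lt_card A \<kappa> \<Longrightarrow> lt_card B \<kappa> \<Longrightarrow> lt_card (A \<union> B) \<kappa>"
  unfolding lt_card_def by (rule card_of_Un_ordLess_infinite_Field[OF vl_props(2) vl_props(1)])

lemma lt_Times: "very_large_card \<kappa> \<Longrightarrow> lt_card A \<kappa> \<Longrightarrow> lt_card B \<kappa> \<Longrightarrow> lt_card (A \<times> B) \<kappa>"
proof -
  assume K: "very_large_card \<kappa>" and a: "lt_card A \<kappa>" and b: "lt_card B \<kappa>"
  have "A \<times> B = (\<Union>x\<in>A. (\<lambda>y. (x, y)) ` B)" by auto
  moreover have "lt_card (\<Union>x\<in>A. (\<lambda>y. (x, y)) ` B) \<kappa>"
    by (rule lt_UN[OF K a]) (rule lt_image[OF b])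
  ultimately show ?thesis by simp
qed

lemma lt_Plus: "very_large_card \<kappa> \<Longrightarrow> lt_card A \<kappa> \<Longrightarrow> lt_card B \<kappa> \<Longrightarrow> lt_card (A <+> B) \<kappa>"
  unfolding lt_card_def by (rule card_of_Plus_ordLess_infinite_Field[OF vl_props(2) vl_props(1)])

lemma lt_Pow: "very_large_card \<kappa> \<Longrightarrow> lt_card A \<kappa> \<Longrightarrow> lt_card (Pow A) \<kappa>"
proof -
  assume K: "very_large_card \<kappa>" and a: "lt_card A \<kappa>"
  have "\<exists>B < Field \<kappa>. |A| =o |B| \<and> |B| <o \<kappa>"
    using a internalize_card_of_ordLess[of A \<kappa>] unfolding lt_card_def by simp
  then obtain B where B: "B \<subseteq> Field \<kappa>" "|A| =o |B|" "|B| <o \<kappa>" by blast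
  then have pB: "lt_card (Pow B) \<kappa>" using K unfolding very_large_card_def lt_card_def by blast
  obtain f where f: "bij_betw f A B" using B(2) card_of_ordIso by blast
  have "bij_betw (image f) (Pow A) (Pow B)" using f bij_betw_Pow by blast
  then have "inj_on (image f) (Pow A)" "image f ` Pow A \<subseteq> Pow B" by (auto simp: bij_betw_def)
  then show ?thesis using lt_inj[OF pB] by blast
qed

lemma lt_fun: "very_large_card \<kappa> \<Longrightarrow> lt_card B \<kappa> \<Longrightarrow> lt_card {f :: nat \<Rightarrow> 'b. range f \<subseteq> B} \<kappa>"
proof -
  assume K: "very_large_card \<kappa>" and b: "lt_card B \<kappa>"
  have P: "lt_card (Pow ((UNIV::nat set) \<times> B)) \<kappa>"
    by (rule lt_Pow[OF K], rule lt_Times[OF K lt_countable[OF K] b]) simp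
  have I: "inj_on (\<lambda>f. {(n, f n) | n. True}) {f :: nat \<Rightarrow> 'b. range f \<subseteq> B}"
  proof (rule inj_onI)
    fix f g :: "nat \<Rightarrow> 'b"
    assume eq: "{(n, f n) | n. True} = {(n, g n) | n. True}"
    show "f = g"
    proof
      fix n
      have "(n, f n) \<in> {(n, g n) | n. True}" using eq by blast
      then show "f n = g n" by simp
    qed
  qed
  have S: "(\<lambda>f. {(n, f n) | n. True}) ` {f :: nat \<Rightarrow> 'b. range f \<subseteq> B} \<subseteq> Pow ((UNIV::nat set) \<times> B)"
    by blast
  show ?thesis by (rule lt_inj[OF P I S])
qed



lemma evalt_aut: "is_aut S \<sigma> \<Longrightarrow> evalt S (\<sigma> \<circ> v) t = \<sigma> (evalt S v t)"
proof (induction t)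
  case (Var n) then show ?case by simp
next
  case (Fn f ts)
  have "map (evalt S (\<sigma> \<circ> v)) ts = map \<sigma> (map (evalt S v) ts)"
    using Fn by (auto simp: comp_def)
  then show ?case using Fn.prems by (simp only: evalt.simps is_aut_def)
qed

lemma sat_aut: "is_aut S \<sigma> \<Longrightarrow> sat S (\<sigma> \<circ> v) \<phi> = sat S v \<phi>"
proof (induction \<phi> arbitrary: v)
  case (Eqf s t)
  then have "inj \<sigma>" by (simp add: is_aut_def bij_def)
  then show ?case using Eqf by (simp only: sat.simps evalt_aut inj_eq)
next
  case (Rel r ts)
  have "map (evalt S (\<sigma> \<circ> v)) ts = map (\<sigma> \<circ> evalt S v) ts"
    by (rule map_cong[OF refl]) (simp only: evalt_aut[OF Rel.prems] comp_apply)
  then have "map (evalt S (\<sigma> \<circ> v)) ts = map \<sigma> (map (evalt S v) ts)"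
    by (simp only: map_map)
  then show ?case using Rel by (simp only: sat.simps is_aut_def)
next
  case (Exi n \<phi>)
  have b: "bij \<sigma>" using Exi.prems by (simp add: is_aut_def)
  have eq: "(\<sigma> \<circ> v)(n := x) = \<sigma> \<circ> (v(n := inv \<sigma> x))" for x
    using b by (auto simp: fun_eq_iff bij_is_surj surj_f_inv_f)
  show ?case
  proof
    assume "sat S (\<sigma> \<circ> v) (Exi n \<phi>)"
    then obtain x where "sat S ((\<sigma> \<circ> v)(n := x)) \<phi>" by auto
    then have "sat S (v(n := inv \<sigma> x)) \<phi>" using eq Exi.IH[OF Exi.prems] by metis
    then show "sat S v (Exi n \<phi>)" by auto
  next
    assume "sat S v (Exi n \<phi>)"
    then obtain y where y: "sat S (v(n := y)) \<phi>" by auto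
    have "v(n := y) = v(n := inv \<sigma> (\<sigma> y))" using b by (simp add: bij_is_inj)
    then have "sat S ((\<sigma> \<circ> v)(n := \<sigma> y)) \<phi>" using eq Exi.IH[OF Exi.prems] y by metis
    then show "sat S (\<sigma> \<circ> v) (Exi n \<phi>)" by auto
  qed
qed auto

lemma aut_id: "is_aut S id"
  by (simp add: is_aut_def)

lemma aut_comp: "is_aut S \<sigma> \<Longrightarrow> is_aut S \<tau> \<Longrightarrow> is_aut S (\<sigma> \<circ> \<tau>)"
proof -
  assume a: "is_aut S \<sigma>" and b: "is_aut S \<tau>"
  have m: "map (\<sigma> \<circ> \<tau>) xs = map \<sigma> (map \<tau> xs)" for xs by (simp only: map_map)
  have "(\<sigma> \<circ> \<tau>) (fst S f xs) = fst S f (map (\<sigma> \<circ> \<tau>) xs)" for f xs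
    using a b unfolding is_aut_def m comp_apply by metis
  moreover have "snd S r (map (\<sigma> \<circ> \<tau>) xs) = snd S r xs" for r xs
    using a b unfolding is_aut_def m by metis
  moreover have "bij (\<sigma> \<circ> \<tau>)" using a b unfolding is_aut_def by (metis bij_comp)
  ultimately show ?thesis unfolding is_aut_def by blast
qed

lemma aut_inv: "is_aut S \<sigma> \<Longrightarrow> is_aut S (inv \<sigma>)"
proof -
  assume a: "is_aut S \<sigma>"
  then have b: "bij \<sigma>" by (simp add: is_aut_def)
  have m: "map \<sigma> (map (inv \<sigma>) xs) = xs" for xs using b
    by (induction xs) (auto simp: bij_is_surj surj_f_inv_f)
  have "inv \<sigma> (fst S f xs) = fst S f (map (inv \<sigma>) xs)" for f xs
  proof -
    have "\<sigma> (fst S f (map (inv \<sigma>) xs)) = fst S f xs" using a m by (simp add: is_aut_def)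
    then show ?thesis using b by (metis bij_inv_eq_iff)
  qed
  moreover have "snd S r (map (inv \<sigma>) xs) = snd S r xs" for r xs
    using a m unfolding is_aut_def by metis
  ultimately show ?thesis using b by (simp add: is_aut_def bij_imp_bij_inv)
qed

lemma act_comp: "act (\<sigma> \<circ> \<tau>) e = act \<sigma> (act \<tau> e)"
  by (auto simp: act_def image_iff comp_assoc)

lemma act_id: "act id e = e"
  by (simp add: act_def)

lemma inv_comp_self: "is_aut S \<sigma> \<Longrightarrow> inv \<sigma> \<circ> \<sigma> = id"
  unfolding is_aut_def using bij_is_inj[of \<sigma>] inj_iff[of \<sigma>] by simp

lemma self_comp_inv: "is_aut S \<sigma> \<Longrightarrow> \<sigma> \<circ> inv \<sigma> = id"
  unfolding is_aut_def using bij_is_surj[of \<sigma>] surj_iff[of \<sigma>] by simp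

lemma act_inv_act: "is_aut S \<sigma> \<Longrightarrow> act (inv \<sigma>) (act \<sigma> e) = e"
  using act_comp[of "inv \<sigma>" \<sigma> e, symmetric] by (simp add: inv_comp_self act_id)

lemma act_act_inv: "is_aut S \<sigma> \<Longrightarrow> act \<sigma> (act (inv \<sigma>) e) = e"
  using act_comp[of \<sigma> "inv \<sigma>" e, symmetric] by (simp add: self_comp_inv act_id)

lemma fix_inv: "is_aut S \<sigma> \<Longrightarrow> act \<sigma> y = y \<Longrightarrow> act (inv \<sigma>) y = y"
  using act_inv_act[of S \<sigma> y] by simp

definition cl :: "('f, 'r, 'a) struc \<Rightarrow> ('f, 'r) fm set \<Rightarrow> ('f, 'r) fm set \<Rightarrow> (nat \<Rightarrow> 'a) \<Rightarrow> (nat \<Rightarrow> 'a) set" where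
  "cl S \<Sigma> \<Phi> a = {b \<in> tdef S \<Sigma>. Erel S \<Phi> a b}"

lemma tdef_aut: "is_aut S \<sigma> \<Longrightarrow> (\<sigma> \<circ> a \<in> tdef S \<Sigma>) = (a \<in> tdef S \<Sigma>)"
  by (simp add: tdef_def sat_aut)

lemma pairv_comp: "pairv (\<sigma> \<circ> a) (\<sigma> \<circ> b) = \<sigma> \<circ> pairv a b"
  by (auto simp: pairv_def fun_eq_iff)

lemma Erel_aut: "is_aut S \<sigma> \<Longrightarrow> Erel S \<Phi> (\<sigma> \<circ> a) (\<sigma> \<circ> b) = Erel S \<Phi> a b"
  by (simp add: Erel_def pairv_comp sat_aut)

lemma act_cl: "is_aut S \<sigma> \<Longrightarrow> act \<sigma> (cl S \<Sigma> \<Phi> a) = cl S \<Sigma> \<Phi> (\<sigma> \<circ> a)"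
proof -
  assume s: "is_aut S \<sigma>"
  show ?thesis
  proof
    show "act \<sigma> (cl S \<Sigma> \<Phi> a) \<subseteq> cl S \<Sigma> \<Phi> (\<sigma> \<circ> a)"
      using s by (auto simp: act_def cl_def tdef_aut Erel_aut)
  next
    show "cl S \<Sigma> \<Phi> (\<sigma> \<circ> a) \<subseteq> act \<sigma> (cl S \<Sigma> \<Phi> a)"
    proof
      fix b assume b: "b \<in> cl S \<Sigma> \<Phi> (\<sigma> \<circ> a)"
      have e: "\<sigma> \<circ> (inv \<sigma> \<circ> b) = b" using self_comp_inv[OF s] by (metis comp_assoc id_comp)
      then have "inv \<sigma> \<circ> b \<in> cl S \<Sigma> \<Phi> a" using b s
        by (auto simp: cl_def) (metis tdef_aut, metis Erel_aut)
      then show "b \<in> act \<sigma> (cl S \<Sigma> \<Phi> a)" unfolding act_def using e by (metis image_eqI)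
    qed
  qed
qed

lemma hyperdef_cl: "hyperdef S X \<Longrightarrow> \<exists>\<Sigma> \<Phi>. X = {cl S \<Sigma> \<Phi> a | a. a \<in> tdef S \<Sigma>}"
  unfolding hyperdef_def cl_def by blast

lemma hyperdef_inv: "hyperdef S X \<Longrightarrow> x \<in> X \<Longrightarrow> is_aut S \<sigma> \<Longrightarrow> act \<sigma> x \<in> X"
proof -
  assume h: "hyperdef S X" and x: "x \<in> X" and s: "is_aut S \<sigma>"
  obtain \<Sigma> \<Phi> where X: "X = {cl S \<Sigma> \<Phi> a | a. a \<in> tdef S \<Sigma>}" using hyperdef_cl[OF h] by blast
  then obtain a where a: "a \<in> tdef S \<Sigma>" "x = cl S \<Sigma> \<Phi> a" using x by blast
  have "act \<sigma> x = cl S \<Sigma> \<Phi> (\<sigma> \<circ> a)" using a s act_cl by metis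
  moreover have "\<sigma> \<circ> a \<in> tdef S \<Sigma>" using a s tdef_aut by metis
  ultimately show ?thesis using X by blast
qed



type_synonym ('f, 'r) tok = "(nat \<times> nat) + ('f \<times> nat) + ('r \<times> nat)"

primrec enct :: "'f trm \<Rightarrow> nat list \<Rightarrow> ('f, 'r) tok option" where
  "enct (Var n) = (\<lambda>p. if p = [] then Some (Inl (0, n)) else None)"
| "enct (Fn f ts) = (\<lambda>p. case p of [] \<Rightarrow> Some (Inr (Inl (f, length ts)))
     | i # q \<Rightarrow> if i < length ts then (map enct ts ! i) q else None)"

lemma enct_inj: "(enct s :: nat list \<Rightarrow> ('f, 'r) tok option) = enct t \<Longrightarrow> s = t"
proof (induction s arbitrary: t)
  case (Var n)
  then show ?case
  proof (cases t)
    case (Var m)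
    then show ?thesis using fun_cong[OF Var.prems, of "[]"] by simp
  next
    case (Fn g us)
    then show ?thesis using fun_cong[OF Var.prems, of "[]"] by simp
  qed
next
  case (Fn f ts)
  show ?case
  proof (cases t)
    case (Var m)
    then show ?thesis using fun_cong[OF Fn.prems, of "[]"] by simp
  next
    case (Fn g us)
    note FnT = this
    have r: "Some (Inr (Inl (f, length ts))) = (Some (Inr (Inl (g, length us))) :: ('f, 'r) tok option)"
      using fun_cong[OF Fn.prems, of "[]"] FnT by simp
    then have fg: "f = g" and len: "length ts = length us" by auto
    have "ts ! i = us ! i" if i: "i < length ts" for i
    proof -
      have "(enct (ts ! i) :: nat list \<Rightarrow> ('f, 'r) tok option) = enct (us ! i)"
      proof
        fix q
        show "(enct (ts ! i) :: nat list \<Rightarrow> ('f, 'r) tok option) q = enct (us ! i) q"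
          using fun_cong[OF Fn.prems, of "i # q"] FnT i len by simp
      qed
      then show ?thesis using Fn.IH i by (meson nth_mem)
    qed
    then show ?thesis using FnT fg len by (simp add: nth_equalityI)
  qed
qed

primrec encf :: "('f, 'r) fm \<Rightarrow> nat list \<Rightarrow> ('f, 'r) tok option" where
  "encf Bot = (\<lambda>p. if p = [] then Some (Inl (1, 0)) else None)"
| "encf (Eqf s t) = (\<lambda>p. case p of [] \<Rightarrow> Some (Inl (2, 0))
     | i # q \<Rightarrow> if i = 0 then enct s q else if i = 1 then enct t q else None)"
| "encf (Rel r ts) = (\<lambda>p. case p of [] \<Rightarrow> Some (Inr (Inr (r, length ts)))
     | i # q \<Rightarrow> if i < length ts then enct (ts ! i) q else None)"
| "encf (Neg \<phi>) = (\<lambda>p. case p of [] \<Rightarrow> Some (Inl (3, 0))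
     | i # q \<Rightarrow> if i = 0 then encf \<phi> q else None)"
| "encf (Conj \<phi> \<psi>) = (\<lambda>p. case p of [] \<Rightarrow> Some (Inl (4, 0))
     | i # q \<Rightarrow> if i = 0 then encf \<phi> q else if i = 1 then encf \<psi> q else None)"
| "encf (Exi n \<phi>) = (\<lambda>p. case p of [] \<Rightarrow> Some (Inl (5, n))
     | i # q \<Rightarrow> if i = 0 then encf \<phi> q else None)"

lemma encf_root: "encf \<phi> [] = Some (Inl (1, 0)) \<Longrightarrow> \<phi> = Bot"
  "encf \<phi> [] = Some (Inl (2, 0)) \<Longrightarrow> \<exists>s t. \<phi> = Eqf s t"
  "encf \<phi> [] = Some (Inr (Inr (r, k))) \<Longrightarrow> \<exists>ts. \<phi> = Rel r ts \<and> length ts = k"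
  "encf \<phi> [] = Some (Inl (3, 0)) \<Longrightarrow> \<exists>\<psi>. \<phi> = Neg \<psi>"
  "encf \<phi> [] = Some (Inl (4, 0)) \<Longrightarrow> \<exists>\<psi> \<chi>. \<phi> = Conj \<psi> \<chi>"
  "encf \<phi> [] = Some (Inl (5, n)) \<Longrightarrow> \<exists>\<psi>. \<phi> = Exi n \<psi>"
  by (cases \<phi>; simp)+

lemma sub_eq: "encf \<phi> = encf \<psi> \<Longrightarrow> (\<And>q. encf \<phi> (i # q) = encf \<psi> (i # q))"
  by simp

lemma encf_inj:
  fixes \<phi> \<psi> :: "('f, 'r) fm"
  shows "encf \<phi> = encf \<psi> \<Longrightarrow> \<phi> = \<psi>"
proof (induction \<phi> arbitrary: \<psi>)
  case Bot
  have r: "encf \<psi> [] = Some (Inl (1, 0))" using fun_cong[OF Bot, of "[]"] by simp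
  then show ?case using encf_root(1)[OF r] by simp
next
  case (Eqf s t)
  have r: "encf \<psi> [] = Some (Inl (2, 0))" using fun_cong[OF Eqf, of "[]"] by simp
  then obtain s' t' where p: "\<psi> = Eqf s' t'" using encf_root(2)[OF r] by blast
  have "(enct s :: nat list \<Rightarrow> ('f, 'r) tok option) = enct s'"
  proof
    fix q show "(enct s q :: ('f, 'r) tok option) = enct s' q" using fun_cong[OF Eqf, of "0 # q"] p by simp
  qed
  moreover have "(enct t :: nat list \<Rightarrow> ('f, 'r) tok option) = enct t'"
  proof
    fix q show "(enct t q :: ('f, 'r) tok option) = enct t' q" using fun_cong[OF Eqf, of "1 # q"] p by simp
  qed
  ultimately
  show ?case using p enct_inj by metis
next
  case (Rel r ts)
  have r: "encf \<psi> [] = Some (Inr (Inr (r, length ts)))" using fun_cong[OF Rel, of "[]"] by simp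
  then obtain us where p: "\<psi> = Rel r us" and len: "length us = length ts"
    using encf_root(3)[OF r] by blast
  have "ts ! i = us ! i" if i: "i < length ts" for i
  proof -
    have "(enct (ts ! i) :: nat list \<Rightarrow> ('f, 'r) tok option) = enct (us ! i)"
    proof
      fix q
      show "(enct (ts ! i) q :: ('f, 'r) tok option) = enct (us ! i) q"
        using fun_cong[OF Rel, of "i # q"] p i len by simp
    qed
    then show ?thesis using enct_inj by metis
  qed
  then show ?case using p len by (simp add: nth_equalityI)
next
  case (Neg \<phi>)
  have r: "encf \<psi> [] = Some (Inl (3, 0))" using fun_cong[OF Neg.prems, of "[]"] by simp
  then obtain \<psi>' where p: "\<psi> = Neg \<psi>'" using encf_root(4)[OF r] by blast
  have "encf \<phi> = encf \<psi>'"
  proof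
    fix q show "encf \<phi> q = encf \<psi>' q" using fun_cong[OF Neg.prems, of "0 # q"] p by simp
  qed
  then show ?case using p Neg.IH by metis
next
  case (Conj \<phi>1 \<phi>2)
  have r: "encf \<psi> [] = Some (Inl (4, 0))" using fun_cong[OF Conj.prems, of "[]"] by simp
  then obtain \<psi>1 \<psi>2 where p: "\<psi> = Conj \<psi>1 \<psi>2" using encf_root(5)[OF r] by blast
  have "encf \<phi>1 = encf \<psi>1"
  proof
    fix q show "encf \<phi>1 q = encf \<psi>1 q" using fun_cong[OF Conj.prems, of "0 # q"] p by simp
  qed
  moreover have "encf \<phi>2 = encf \<psi>2"
  proof
    fix q show "encf \<phi>2 q = encf \<psi>2 q" using fun_cong[OF Conj.prems, of "1 # q"] p by simp
  qed
  ultimately show ?case using p Conj.IH by metis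
next
  case (Exi n \<phi>)
  have r: "encf \<psi> [] = Some (Inl (5, n))" using fun_cong[OF Exi.prems, of "[]"] by simp
  then obtain \<psi>' where p: "\<psi> = Exi n \<psi>'" using encf_root(6)[OF r] by blast
  have "encf \<phi> = encf \<psi>'"
  proof
    fix q show "encf \<phi> q = encf \<psi>' q" using fun_cong[OF Exi.prems, of "0 # q"] p by simp
  qed
  then show ?case using p Exi.IH by metis
qed

lemma lt_fun_gen: "very_large_card \<kappa> \<Longrightarrow> countable (UNIV :: 'i set) \<Longrightarrow> lt_card B \<kappa> \<Longrightarrow>
  lt_card {f :: 'i \<Rightarrow> 'b. range f \<subseteq> B} \<kappa>"
proof -
  assume K: "very_large_card \<kappa>" and c: "countable (UNIV :: 'i set)" and b: "lt_card B \<kappa>"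
  have P: "lt_card (Pow ((UNIV::'i set) \<times> B)) \<kappa>"
    by (rule lt_Pow[OF K], rule lt_Times[OF K lt_countable[OF K c] b])
  have I: "inj_on (\<lambda>f. {(n, f n) | n. True}) {f :: 'i \<Rightarrow> 'b. range f \<subseteq> B}"
  proof (rule inj_onI)
    fix f g :: "'i \<Rightarrow> 'b"
    assume eq: "{(n, f n) | n. True} = {(n, g n) | n. True}"
    show "f = g"
    proof
      fix n
      have "(n, f n) \<in> {(n, g n) | n. True}" using eq by blast
      then show "f n = g n" by simp
    qed
  qed
  have S: "(\<lambda>f. {(n, f n) | n. True}) ` {f :: 'i \<Rightarrow> 'b. range f \<subseteq> B} \<subseteq> Pow ((UNIV::'i set) \<times> B)"
    by blast
  show ?thesis by (rule lt_inj[OF P I S])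
qed

lemma lt_UNIV_Plus: "very_large_card \<kappa> \<Longrightarrow> lt_card (UNIV :: 'a set) \<kappa> \<Longrightarrow> lt_card (UNIV :: 'b set) \<kappa> \<Longrightarrow>
  lt_card (UNIV :: ('a + 'b) set) \<kappa>"
  using lt_Plus[of \<kappa> "UNIV :: 'a set" "UNIV :: 'b set"] by (simp add: UNIV_Plus_UNIV)

lemma lt_UNIV_Times: "very_large_card \<kappa> \<Longrightarrow> lt_card (UNIV :: 'a set) \<kappa> \<Longrightarrow> lt_card (UNIV :: 'b set) \<kappa> \<Longrightarrow>
  lt_card (UNIV :: ('a \<times> 'b) set) \<kappa>"
  using lt_Times[of \<kappa> "UNIV :: 'a set" "UNIV :: 'b set"] by simp

lemma lt_fm: "very_large_card \<kappa> \<Longrightarrow> lt_card (UNIV :: 'f set) \<kappa> \<Longrightarrow> lt_card (UNIV :: 'r set) \<kappa> \<Longrightarrow>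
  lt_card (UNIV :: ('f, 'r) fm set) \<kappa>"
proof -
  assume K: "very_large_card \<kappa>" and f: "lt_card (UNIV :: 'f set) \<kappa>" and r: "lt_card (UNIV :: 'r set) \<kappa>"
  have nat: "lt_card (UNIV :: nat set) \<kappa>" by (rule lt_countable[OF K]) simp
  have nn: "lt_card (UNIV :: (nat \<times> nat) set) \<kappa>" by (rule lt_countable[OF K]) simp
  have tok: "lt_card (UNIV :: ('f, 'r) tok set) \<kappa>"
    by (intro lt_UNIV_Plus[OF K] nn lt_UNIV_Times[OF K] f r nat)
  have opt: "lt_card (UNIV :: ('f, 'r) tok option set) \<kappa>"
  proof -
    have "(UNIV :: ('f, 'r) tok option set) = insert None (Some ` UNIV)" by (auto intro: option.exhaust)
    moreover have "lt_card (insert None (Some ` (UNIV :: ('f, 'r) tok set))) \<kappa>"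
      using lt_Un[OF K lt_countable[OF K, of "{None}"] lt_image[OF tok, of Some]] by simp
    ultimately show ?thesis by simp
  qed
  have F: "lt_card {h :: nat list \<Rightarrow> ('f, 'r) tok option. range h \<subseteq> UNIV} \<kappa>"
    by (rule lt_fun_gen[OF K _ opt]) simp
  have I: "inj_on (encf :: ('f, 'r) fm \<Rightarrow> _) UNIV" by (rule inj_onI) (rule encf_inj)
  show ?thesis by (rule lt_inj[OF F I]) simp
qed



lemma key:
  assumes K: "very_large_card \<kappa>" and O: "orth S \<kappa> X Y" and hY: "hyperdef S Y"
    and CX: "CX \<subseteq> X" "lt_card CX \<kappa>" and CY: "CY \<subseteq> Y" "lt_card CY \<kappa>"
    and b: "b \<subseteq> X" "lt_card b \<kappa>" and b': "b' \<subseteq> Y" "lt_card b' \<kappa>"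
    and E1: "lt_card {act \<sigma> c | \<sigma>. is_aut S \<sigma> \<and> fixes_all \<sigma> (CX \<union> CY \<union> b)} \<kappa>"
    and E2: "lt_card {act \<sigma> c | \<sigma>. is_aut S \<sigma> \<and> fixes_all \<sigma> (CX \<union> CY \<union> b')} \<kappa>"
  shows "lt_card {act g c | g. is_aut S g \<and> fixes_all g (CX \<union> CY)} \<kappa>"
proof -
  define E1s where "E1s = {act \<sigma> c | \<sigma>. is_aut S \<sigma> \<and> fixes_all \<sigma> (CX \<union> CY \<union> b)}"
  define E2s where "E2s = {act \<sigma> c | \<sigma>. is_aut S \<sigma> \<and> fixes_all \<sigma> (CX \<union> CY \<union> b')}"
  have "\<forall>e\<in>E1s. \<exists>k. is_aut S k \<and> fixes_all k (CX \<union> CY \<union> b) \<and> act k c = e"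
    unfolding E1s_def by blast
  then obtain k where k: "\<And>e. e \<in> E1s \<Longrightarrow> is_aut S (k e) \<and> fixes_all (k e) (CX \<union> CY \<union> b) \<and> act (k e) c = e"
    by metis
  define W where "W = (\<Union>e\<in>E1s. act (k e) ` b')"
  define Q where "Q = CY \<union> b' \<union> W"
  define P where "P = CX \<union> b"
  have PX: "P \<subseteq> X" using CX b by (auto simp: P_def)
  have PS: "lt_card P \<kappa>" unfolding P_def by (rule lt_Un[OF K CX(2) b(2)])
  have WY: "W \<subseteq> Y"
  proof
    fix y assume "y \<in> W"
    then obtain e d where e: "e \<in> E1s" and d: "d \<in> b'" and y: "y = act (k e) d" unfolding W_def by blast
    show "y \<in> Y" using hyperdef_inv[OF hY] d b'(1) k[OF e] y by blast
  qed
  have QY: "Q \<subseteq> Y" using CY b' WY by (auto simp: Q_def)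
  have E1S: "lt_card E1s \<kappa>" using E1 unfolding E1s_def .
  have E2S: "lt_card E2s \<kappa>" using E2 unfolding E2s_def .
  have WS: "lt_card W \<kappa>" unfolding W_def
    by (rule lt_UN[OF K E1S]) (rule lt_image[OF b'(2)])
  have QS: "lt_card Q \<kappa>" unfolding Q_def by (intro lt_Un[OF K] CY(2) b'(2) WS)
  have sub: "{act g c | g. is_aut S g \<and> fixes_all g (CX \<union> CY)} \<subseteq> (\<Union>e\<in>E1s. act (k e) ` E2s)"
  proof
    fix x assume "x \<in> {act g c | g. is_aut S g \<and> fixes_all g (CX \<union> CY)}"
    then obtain g where g: "is_aut S g" "fixes_all g (CX \<union> CY)" and x: "x = act g c" by blast
    have gX: "act g d = d" if "d \<in> CX" for d using g(2) that by (simp add: fixes_all_def)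
    have gY: "act g d = d" if "d \<in> CY" for d using g(2) that by (simp add: fixes_all_def)
    obtain \<rho> where \<rho>: "is_aut S \<rho>" "\<forall>p\<in>P. act \<rho> p = act g p" "\<forall>y\<in>Q. act \<rho> y = act id y"
      using O PX QY PS QS g(1) aut_id unfolding orth_def by metis
    have \<rho>Q: "act \<rho> y = y" if "y \<in> Q" for y using \<rho>(3) that by (simp add: act_id)
    define h where "h = inv \<rho> \<circ> g"
    have h: "is_aut S h" unfolding h_def by (intro aut_comp aut_inv \<rho>(1) g(1))
    have hfix: "fixes_all h (CX \<union> CY \<union> b)" unfolding fixes_all_def
    proof
      fix d assume d: "d \<in> CX \<union> CY \<union> b"
      show "act h d = d"
      proof (cases "d \<in> P")
        case True
        then have "act h d = act (inv \<rho>) (act \<rho> d)" using \<rho>(2) by (simp add: h_def act_comp)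
        then show ?thesis using act_inv_act[OF \<rho>(1)] by simp
      next
        case False
        then have "d \<in> CY" using d by (auto simp: P_def)
        then have "act g d = d" "act \<rho> d = d" using gY \<rho>Q by (auto simp: Q_def)
        then show ?thesis using fix_inv[OF \<rho>(1)] by (simp add: h_def act_comp)
      qed
    qed
    define e where "e = act h c"
    have eE: "e \<in> E1s" unfolding E1s_def e_def using h hfix by blast
    have xe: "x = act \<rho> e" unfolding e_def h_def x act_comp using act_act_inv[OF \<rho>(1)] by simp
    note ke = k[OF eE]
    define m where "m = inv (k e) \<circ> \<rho> \<circ> k e"
    have m: "is_aut S m" unfolding m_def using ke \<rho>(1) by (intro aut_comp aut_inv) auto
    have keX: "act (k e) d = d" if "d \<in> CX \<union> CY" for d using ke that by (simp add: fixes_all_def)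
    have mact: "act m d = act (inv (k e)) (act \<rho> (act (k e) d))" for d by (simp add: m_def act_comp)
    have mfix: "fixes_all m (CX \<union> CY \<union> b')" unfolding fixes_all_def
    proof
      fix d assume d: "d \<in> CX \<union> CY \<union> b'"
      show "act m d = d"
      proof (cases "d \<in> b'")
        case True
        then have "act (k e) d \<in> W" unfolding W_def using eE by blast
        then have "act \<rho> (act (k e) d) = act (k e) d" using \<rho>Q by (auto simp: Q_def)
        then show ?thesis using mact act_inv_act[of S "k e" d] ke by simp
      next
        case False
        then have d2: "d \<in> CX \<union> CY" using d by blast
        have "act \<rho> d = d"
        proof (cases "d \<in> CX")
          case True then show ?thesis using \<rho>(2) gX by (auto simp: P_def)
        next
          case False then show ?thesis using d2 \<rho>Q by (auto simp: Q_def)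
        qed
        then show ?thesis using mact keX[OF d2] fix_inv[of S "k e" d] ke by simp
      qed
    qed
    have mE: "act m c \<in> E2s" unfolding E2s_def using m mfix by blast
    have "act (k e) (act m c) = act \<rho> (act (k e) c)"
      using mact[of c] act_act_inv[of S "k e"] ke by simp
    then have "act (k e) (act m c) = x" using ke xe by simp
    then show "x \<in> (\<Union>e\<in>E1s. act (k e) ` E2s)" using eE mE by blast
  qed
  have "lt_card (\<Union>e\<in>E1s. act (k e) ` E2s) \<kappa>"
    by (rule lt_UN[OF K E1S]) (rule lt_image[OF E2S])
  then have "lt_card {act g c | g. is_aut S g \<and> fixes_all g (CX \<union> CY)} \<kappa>" using sub by (rule lt_sub)
  then show ?thesis .
qed



lemma count:
  fixes S :: "('f, 'r, 'a) struc" and \<kappa> :: "'k rel" and A :: "'a set"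
  assumes K: "very_large_card \<kappa>" and SH: "strongly_homogeneous S \<kappa>"
    and F: "lt_card (UNIV :: 'f set) \<kappa>" and R: "lt_card (UNIV :: 'r set) \<kappa>"
    and hZ: "hyperdef S Z" and AS: "lt_card A \<kappa>"
    and orb: "\<And>z. z \<in> Z \<Longrightarrow> lt_card {act g z | g. is_aut S g \<and> (\<forall>x\<in>A. g x = x)} \<kappa>"
  shows "lt_card Z \<kappa>"
proof -
  obtain \<Sigma> \<Phi> where Z: "Z = {cl S \<Sigma> \<Phi> a | a. a \<in> tdef S \<Sigma>}" using hyperdef_cl[OF hZ] by blast
  define rz where "rz z = (SOME a. a \<in> tdef S \<Sigma> \<and> z = cl S \<Sigma> \<Phi> a)" for z
  have rz: "rz z \<in> tdef S \<Sigma> \<and> z = cl S \<Sigma> \<Phi> (rz z)" if "z \<in> Z" for z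
  proof -
    have "\<exists>a. a \<in> tdef S \<Sigma> \<and> z = cl S \<Sigma> \<Phi> a" using that Z by blast
    then show ?thesis unfolding rz_def by (rule someI_ex)
  qed
  define inst :: "(nat \<Rightarrow> 'a) \<Rightarrow> (nat \<Rightarrow> nat + 'a) \<Rightarrow> nat \<Rightarrow> 'a"
    where "inst a \<pi> n = (case \<pi> n of Inl i \<Rightarrow> a i | Inr x \<Rightarrow> x)" for a \<pi> n
  define PP where "PP = {\<pi> :: nat \<Rightarrow> nat + 'a. range \<pi> \<subseteq> UNIV <+> A}"
  define T where "T z = {(\<phi> :: ('f, 'r) fm, \<pi>). \<pi> \<in> PP \<and> sat S (inst (rz z) \<pi>) \<phi>}" for z
  have Tmem: "((\<phi>, \<pi>) \<in> T z) = (\<pi> \<in> PP \<and> sat S (inst (rz z) \<pi>) \<phi>)" for \<phi> \<pi> z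
    unfolding T_def by simp
  have homog: "\<exists>g. is_aut S g \<and> (\<forall>x\<in>A. g x = x) \<and> act g z1 = z2"
    if z1: "z1 \<in> Z" and z2: "z2 \<in> Z" and TT: "T z1 = T z2" for z1 z2
  proof -
    define a1 where "a1 = rz z1"
    define a2 where "a2 = rz z2"
    have TT': "(\<pi> \<in> PP \<and> sat S (inst a1 \<pi>) \<phi>) = (\<pi> \<in> PP \<and> sat S (inst a2 \<pi>) \<phi>)" for \<phi> \<pi>
      using Tmem[of \<phi> \<pi> z1] Tmem[of \<phi> \<pi> z2] TT unfolding a1_def a2_def by simp
    define D where "D = A \<union> range a1"
    have DS: "lt_card D \<kappa>" unfolding D_def by (intro lt_Un[OF K AS] lt_countable[OF K]) simp
    define gm where "gm y = (if y \<in> A then y else a2 (SOME i. a1 i = y))" for y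
    have em: "elem_map S D gm" unfolding elem_map_def
    proof (intro allI impI)
      fix \<phi> :: "('f, 'r) fm" and v :: "nat \<Rightarrow> 'a" assume v: "range v \<subseteq> D"
      define \<pi> :: "nat \<Rightarrow> nat + 'a" where "\<pi> n = (if v n \<in> A then Inr (v n) else Inl (SOME i. a1 i = v n))" for n
      have pi: "\<pi> \<in> PP" unfolding PP_def \<pi>_def by auto
      have i1: "inst a1 \<pi> = v"
      proof
        fix n
        show "inst a1 \<pi> n = v n"
        proof (cases "v n \<in> A")
          case True then show ?thesis by (simp add: inst_def \<pi>_def)
        next
          case False
          have "v n \<in> D" using v by blast
          then have "\<exists>i. a1 i = v n" using False unfolding D_def by (metis UnE imageE)
          then have "a1 (SOME i. a1 i = v n) = v n" by (rule someI_ex)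
          then show ?thesis using False by (simp add: inst_def \<pi>_def)
        qed
      qed
      have i2: "inst a2 \<pi> = gm \<circ> v"
        by (auto simp: fun_eq_iff inst_def \<pi>_def gm_def)
      show "sat S v \<phi> = sat S (gm \<circ> v) \<phi>"
        using TT'[of \<pi> \<phi>] pi i1 i2 by simp
    qed
    obtain \<sigma> where \<sigma>: "is_aut S \<sigma>" "\<forall>x\<in>D. \<sigma> x = gm x"
      using SH DS em unfolding strongly_homogeneous_def by blast
    have fixA: "\<forall>x\<in>A. \<sigma> x = x" using \<sigma>(2) by (auto simp: D_def gm_def)
    have eqf: "a2 i = a2 j" if "a1 i = a1 j" for i j
    proof -
      define \<pi> :: "nat \<Rightarrow> nat + 'a" where "\<pi> n = (if n = 0 then Inl i else Inl j)" for n
      have "\<pi> \<in> PP" unfolding PP_def \<pi>_def by auto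
      moreover have "sat S (inst a1 \<pi>) (Eqf (Var 0) (Var 1))" using that by (simp add: inst_def \<pi>_def)
      ultimately have "sat S (inst a2 \<pi>) (Eqf (Var 0) (Var 1))" using TT' by blast
      then show ?thesis by (simp add: inst_def \<pi>_def)
    qed
    have eqA: "a2 i = a1 i" if "a1 i \<in> A" for i
    proof -
      define \<pi> :: "nat \<Rightarrow> nat + 'a" where "\<pi> n = (if n = 0 then Inl i else Inr (a1 i))" for n
      have "\<pi> \<in> PP" unfolding PP_def \<pi>_def using that by auto
      moreover have "sat S (inst a1 \<pi>) (Eqf (Var 0) (Var 1))" by (simp add: inst_def \<pi>_def)
      ultimately have "sat S (inst a2 \<pi>) (Eqf (Var 0) (Var 1))" using TT' by blast
      then show ?thesis by (simp add: inst_def \<pi>_def)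
    qed
    have comp: "\<sigma> \<circ> a1 = a2"
    proof
      fix i
      have s: "\<sigma> (a1 i) = gm (a1 i)" using \<sigma>(2) by (auto simp: D_def)
      show "(\<sigma> \<circ> a1) i = a2 i"
      proof (cases "a1 i \<in> A")
        case True then show ?thesis using s eqA by (simp add: gm_def)
      next
        case False
        have "\<exists>j. a1 j = a1 i" by blast
        then have "a1 (SOME j. a1 j = a1 i) = a1 i" by (rule someI_ex)
        then have "a2 (SOME j. a1 j = a1 i) = a2 i" by (rule eqf)
        then show ?thesis using s False by (simp add: gm_def)
      qed
    qed
    have "act \<sigma> z1 = cl S \<Sigma> \<Phi> (\<sigma> \<circ> a1)" using rz[OF z1] act_cl[OF \<sigma>(1)] unfolding a1_def by metis
    also have "\<dots> = z2" using comp rz[OF z2] unfolding a2_def by simp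
    finally show ?thesis using \<sigma>(1) fixA by blast
  qed
  have Zeq: "Z = (\<Union>\<tau>\<in>T ` Z. {z \<in> Z. T z = \<tau>})" by auto
  have PiS: "lt_card PP \<kappa>" unfolding PP_def
    by (rule lt_fun[OF K], rule lt_Plus[OF K _ AS], rule lt_countable[OF K]) simp
  have TS: "lt_card (T ` Z) \<kappa>"
  proof (rule lt_sub)
    show "lt_card (Pow ((UNIV :: ('f, 'r) fm set) \<times> PP)) \<kappa>"
      by (intro lt_Pow[OF K] lt_Times[OF K] lt_fm[OF K F R] PiS)
    show "T ` Z \<subseteq> Pow ((UNIV :: ('f, 'r) fm set) \<times> PP)" unfolding T_def by auto
  qed
  have "lt_card (\<Union>\<tau>\<in>T ` Z. {z \<in> Z. T z = \<tau>}) \<kappa>"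
  proof (rule lt_UN[OF K TS])
    fix \<tau> assume "\<tau> \<in> T ` Z"
    then obtain z0 where z0: "z0 \<in> Z" "\<tau> = T z0" by blast
    have "{z \<in> Z. T z = \<tau>} \<subseteq> {act g z0 | g. is_aut S g \<and> (\<forall>x\<in>A. g x = x)}"
    proof
      fix z assume "z \<in> {z \<in> Z. T z = \<tau>}"
      then have "z \<in> Z" "T z0 = T z" using z0 by auto
      then show "z \<in> {act g z0 | g. is_aut S g \<and> (\<forall>x\<in>A. g x = x)}" using homog[OF z0(1)] by blast
    qed
    then show "lt_card {z \<in> Z. T z = \<tau>} \<kappa>" by (rule lt_sub[OF orb[OF z0(1)]])
  qed
  then show ?thesis using Zeq by simp
qed



theorem mainTheorem11:
  fixes S :: "('f, 'r, 'a) struc" and \<kappa> :: "'k rel"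
    and X Y Z :: "(nat \<Rightarrow> 'a) set set"
  assumes "very_large_card \<kappa>"
    and "lt_card (UNIV :: 'f set) \<kappa>" and "lt_card (UNIV :: 'r set) \<kappa>"
    and "saturated S \<kappa>" and "strongly_homogeneous S \<kappa>"
    and "hyperdef S X" and "hyperdef S Y" and "hyperdef S Z"
    and "orth S \<kappa> X Y"
    and "alm_internal S \<kappa> Z X (X \<union> Y)"
    and "alm_internal S \<kappa> Z Y (X \<union> Y)"
  shows "lt_card Z \<kappa>"
proof -
  note K = assms(1)
  obtain B1 where B1: "B1 \<subseteq> heq S \<kappa> (X \<union> Y)" "lt_card B1 \<kappa>"
    "\<forall>a\<in>Z. \<exists>b. b \<subseteq> X \<and> lt_card b \<kappa> \<and> bdd S \<kappa> (B1 \<union> b) a"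
    using assms(10) unfolding alm_internal_def by blast
  obtain B2 where B2: "B2 \<subseteq> heq S \<kappa> (X \<union> Y)" "lt_card B2 \<kappa>"
    "\<forall>a\<in>Z. \<exists>b. b \<subseteq> Y \<and> lt_card b \<kappa> \<and> bdd S \<kappa> (B2 \<union> b) a"
    using assms(11) unfolding alm_internal_def by blast
  have "\<forall>e\<in>B1 \<union> B2. \<exists>C. C \<subseteq> X \<union> Y \<and> lt_card C \<kappa> \<and> dclheq S C e"
    using B1(1) B2(1) unfolding heq_def by blast
  then obtain Cf where Cf: "\<And>e. e \<in> B1 \<union> B2 \<Longrightarrow> Cf e \<subseteq> X \<union> Y \<and> lt_card (Cf e) \<kappa> \<and> dclheq S (Cf e) e"
    by metis
  define C where "C = (\<Union>e\<in>B1 \<union> B2. Cf e)"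
  have CS: "lt_card C \<kappa>" unfolding C_def
    by (rule lt_UN[OF K lt_Un[OF K B1(2) B2(2)]]) (use Cf in blast)
  have CXY: "C \<subseteq> X \<union> Y" unfolding C_def using Cf by blast
  define CX where "CX = C \<inter> X"
  define CY where "CY = C \<inter> Y"
  have CU: "CX \<union> CY = C" using CXY by (auto simp: CX_def CY_def)
  have CXS: "lt_card CX \<kappa>" unfolding CX_def using CS lt_sub by blast
  have CYS: "lt_card CY \<kappa>" unfolding CY_def using CS lt_sub by blast
  have fixB: "fixes_all g (B1 \<union> B2)" if g: "is_aut S g" "fixes_all g C" for g
    unfolding fixes_all_def
  proof
    fix e assume e: "e \<in> B1 \<union> B2"
    have "fixes_all g (Cf e)" using g(2) e unfolding fixes_all_def C_def by blast
    then show "act g e = e" using Cf[OF e] g(1) unfolding dclheq_def by blast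
  qed
  have orbC: "lt_card {act g c | g. is_aut S g \<and> fixes_all g (CX \<union> CY)} \<kappa>" if c: "c \<in> Z" for c
  proof -
    obtain b where b: "b \<subseteq> X" "lt_card b \<kappa>" "bdd S \<kappa> (B1 \<union> b) c" using B1(3) c by blast
    obtain b' where b': "b' \<subseteq> Y" "lt_card b' \<kappa>" "bdd S \<kappa> (B2 \<union> b') c" using B2(3) c by blast
    have E1: "lt_card {act \<sigma> c | \<sigma>. is_aut S \<sigma> \<and> fixes_all \<sigma> (CX \<union> CY \<union> b)} \<kappa>"
    proof (rule lt_sub)
      show "lt_card {act \<sigma> c | \<sigma>. is_aut S \<sigma> \<and> fixes_all \<sigma> (B1 \<union> b)} \<kappa>" using b(3) unfolding bdd_def .
      show "{act \<sigma> c | \<sigma>. is_aut S \<sigma> \<and> fixes_all \<sigma> (CX \<union> CY \<union> b)} \<subseteq> {act \<sigma> c | \<sigma>. is_aut S \<sigma> \<and> fixes_all \<sigma> (B1 \<union> b)}"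
      proof
        fix x assume "x \<in> {act \<sigma> c | \<sigma>. is_aut S \<sigma> \<and> fixes_all \<sigma> (CX \<union> CY \<union> b)}"
        then obtain \<sigma> where s: "is_aut S \<sigma>" "fixes_all \<sigma> (CX \<union> CY \<union> b)" "x = act \<sigma> c" by blast
        have "fixes_all \<sigma> C" using s(2) CU unfolding fixes_all_def by blast
        then have "fixes_all \<sigma> (B1 \<union> B2)" using fixB s(1) by blast
        then have "fixes_all \<sigma> (B1 \<union> b)" using s(2) unfolding fixes_all_def by blast
        then show "x \<in> {act \<sigma> c | \<sigma>. is_aut S \<sigma> \<and> fixes_all \<sigma> (B1 \<union> b)}" using s by blast
      qed
    qed
    have E2: "lt_card {act \<sigma> c | \<sigma>. is_aut S \<sigma> \<and> fixes_all \<sigma> (CX \<union> CY \<union> b')} \<kappa>"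
    proof (rule lt_sub)
      show "lt_card {act \<sigma> c | \<sigma>. is_aut S \<sigma> \<and> fixes_all \<sigma> (B2 \<union> b')} \<kappa>" using b'(3) unfolding bdd_def .
      show "{act \<sigma> c | \<sigma>. is_aut S \<sigma> \<and> fixes_all \<sigma> (CX \<union> CY \<union> b')} \<subseteq> {act \<sigma> c | \<sigma>. is_aut S \<sigma> \<and> fixes_all \<sigma> (B2 \<union> b')}"
      proof
        fix x assume "x \<in> {act \<sigma> c | \<sigma>. is_aut S \<sigma> \<and> fixes_all \<sigma> (CX \<union> CY \<union> b')}"
        then obtain \<sigma> where s: "is_aut S \<sigma>" "fixes_all \<sigma> (CX \<union> CY \<union> b')" "x = act \<sigma> c" by blast
        have "fixes_all \<sigma> C" using s(2) CU unfolding fixes_all_def by blast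
        then have "fixes_all \<sigma> (B1 \<union> B2)" using fixB s(1) by blast
        then have "fixes_all \<sigma> (B2 \<union> b')" using s(2) unfolding fixes_all_def by blast
        then show "x \<in> {act \<sigma> c | \<sigma>. is_aut S \<sigma> \<and> fixes_all \<sigma> (B2 \<union> b')}" using s by blast
      qed
    qed
    show ?thesis
      by (rule key[OF K assms(9) assms(7) _ CXS _ CYS b(1,2) b'(1,2) E1 E2]) (auto simp: CX_def CY_def)
  qed
  obtain \<Sigma>X \<Phi>X where HX: "X = {cl S \<Sigma>X \<Phi>X a | a. a \<in> tdef S \<Sigma>X}" using hyperdef_cl[OF assms(6)] by blast
  obtain \<Sigma>Y \<Phi>Y where HY: "Y = {cl S \<Sigma>Y \<Phi>Y a | a. a \<in> tdef S \<Sigma>Y}" using hyperdef_cl[OF assms(7)] by blast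
  define P where "P d a = (d = cl S \<Sigma>X \<Phi>X a \<or> d = cl S \<Sigma>Y \<Phi>Y a)" for d a
  define rep where "rep d = (SOME a. P d a)" for d
  have rep: "P d (rep d)" if "d \<in> C" for d
  proof -
    have "\<exists>a. P d a" using that CXY HX HY unfolding P_def by blast
    then show ?thesis unfolding rep_def by (rule someI_ex)
  qed
  define A where "A = (\<Union>d\<in>C. range (rep d))"
  have AS: "lt_card A \<kappa>" unfolding A_def
    by (rule lt_UN[OF K CS]) (rule lt_countable[OF K], simp)
  have fixC: "fixes_all g (CX \<union> CY)" if g: "is_aut S g" "\<forall>x\<in>A. g x = x" for g
    unfolding CU fixes_all_def
  proof
    fix d assume d: "d \<in> C"
    have "g \<circ> rep d = rep d" using g(2) d unfolding A_def by (auto simp: fun_eq_iff)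
    then show "act g d = d" using rep[OF d] act_cl[OF g(1)] unfolding P_def by metis
  qed
  show ?thesis
  proof (rule count[OF K assms(5) assms(2) assms(3) assms(8) AS])
    fix z assume z: "z \<in> Z"
    show "lt_card {act g z | g. is_aut S g \<and> (\<forall>x\<in>A. g x = x)} \<kappa>"
      by (rule lt_sub[OF orbC[OF z]]) (use fixC in blast)
  qed
qed

end
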